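(* Let $M\subset\mathbb{C}^n$ be a bounded domain with the uniform squeezing property. Then $M$ is pseudoconvex.
   Context: $B_r(x)$ is the Euclidean ball of radius $r$ about $x$. A bounded domain $M\subset\mathbb{C}^n$ has the uniform squeezing property if there are constants $0<a<b$ such that for each $x\in M$ there is a holomorphic embedding $\varphi_x:M\to\mathbb{C}^n$ with $\varphi_x(x)=0$ and $B_a(0)\subset\varphi_x(M)\subset B_b(0)$. *)

theory Defs
  imports "HOL-Analysis.Analysis"
begin

text \<open>C^n is modelled as complex ^ 'n (Euclidean norm). Complex scalar
multiplication of vectors is (*s).\<close>

definition holomorphic_map_on ::
  "(complex ^ 'n \<Rightarrow> complex ^ 'm) \<Rightarrow> (complex ^ 'n) set \<Rightarrow> bool" where
  "holomorphic_map_on f U \<longleftrightarrow>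
     (\<forall>x\<in>U. \<exists>L. (f has_derivative L) (at x) \<and>
                 (\<forall>c v. L (c *s v) = c *s L v))"

definition holomorphic_embedding ::
  "(complex ^ 'n \<Rightarrow> complex ^ 'm) \<Rightarrow> (complex ^ 'n) set \<Rightarrow> bool" where
  "holomorphic_embedding f U \<longleftrightarrow> holomorphic_map_on f U \<and> inj_on f U"

definition domain :: "(complex ^ 'n) set \<Rightarrow> bool" where
  "domain M \<longleftrightarrow> open M \<and> connected M \<and> M \<noteq> {}"

definition uniform_squeezing :: "(complex ^ 'n) set \<Rightarrow> bool" where
  "uniform_squeezing M \<longleftrightarrow>
     (\<exists>a b::real. 0 < a \<and> a < b \<and>
        (\<forall>x\<in>M. \<exists>\<phi> :: complex ^ 'n \<Rightarrow> complex ^ 'n.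
            holomorphic_embedding \<phi> M \<and> \<phi> x = 0 \<and>
            ball 0 a \<subseteq> \<phi> ` M \<and> \<phi> ` M \<subseteq> ball 0 b))"

text \<open>Plurisubharmonic (for continuous real functions, which suffices below):
continuity plus the sub-mean-value inequality on every closed complex disc
{a + \<zeta> w : |\<zeta>| \<le> r} contained in U.\<close>

definition plurisubharmonic_on ::
  "(complex ^ 'n \<Rightarrow> real) \<Rightarrow> (complex ^ 'n) set \<Rightarrow> bool" where
  "plurisubharmonic_on u U \<longleftrightarrow> continuous_on U u \<and>
     (\<forall>a w r. a \<in> U \<and> 0 < r \<and>
        (\<forall>\<zeta>::complex. cmod \<zeta> \<le> r \<longrightarrow> a + \<zeta> *s w \<in> U) \<longrightarrow>
        u a \<le> integral {0..2*pi} (\<lambda>t. u (a + (of_real r * cis t) *s w)) / (2*pi))"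

text \<open>Pseudoconvexity (Hartogs): -log of the Euclidean distance to the
boundary (complement) is plurisubharmonic.\<close>

definition pseudoconvex :: "(complex ^ 'n) set \<Rightarrow> bool" where
  "pseudoconvex M \<longleftrightarrow> plurisubharmonic_on (\<lambda>z. - ln (infdist z (- M))) M"

end

theory Submission
  imports Defs "HOL-Complex_Analysis.Cauchy_Integral_Formula" "HOL-Computational_Algebra.Polynomial"
begin


lemma norm_smult_cvec: "norm (c *s (v::complex^'n)) = cmod c * norm v"
  unfolding norm_vec_def by (simp add: L2_set_right_distrib norm_mult)

lemma bounded_linear_smult_cvec: "bounded_linear (\<lambda>c::complex. c *s (v::complex^'n))"
proof
  show "(c1 + c2) *s v = c1 *s v + c2 *s v" for c1 c2 by (simp add: vector_sadd_rdistrib)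
  show "(r *\<^sub>R c) *s v = r *\<^sub>R (c *s v)" for r c by (vector scaleR_conv_of_real)
  show "\<exists>K. \<forall>c. norm (c *s v) \<le> norm c * K" by (rule exI[of _ "norm v"]) (simp add: norm_smult_cvec)
qed

lemma has_derivative_smult_cvec:
  assumes "(f has_field_derivative f') (at z)"
  shows "((\<lambda>z. f z *s (v::complex^'n)) has_derivative (\<lambda>h. h *s (f' *s v))) (at z)"
proof -
  have "((\<lambda>z. f z *s v) has_derivative (\<lambda>h. (f' * h) *s v)) (at z)"
    using bounded_linear.has_derivative[OF bounded_linear_smult_cvec assms[unfolded has_field_derivative_def]] .
  moreover have "(\<lambda>h. (f' * h) *s v) = (\<lambda>h. h *s (f' *s v))"
    by (auto simp: vector_smult_assoc mult.commute)
  ultimately show ?thesis by simp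
qed

lemma bounded_linear_vec_nth': "bounded_linear (\<lambda>x::complex^'n. x $ i)"
  by (rule bounded_linear_vec_nth)



lemma norm_le_sum_cvec: "norm (x::complex^'n) \<le> (\<Sum>i\<in>UNIV. cmod (x$i))"
  unfolding norm_vec_def by (rule L2_set_le_sum) simp

lemma comp_holo:
  assumes hol: "holomorphic_map_on \<phi> M"
    and df: "\<And>w. \<exists>v. (f has_derivative (\<lambda>h. h *s v)) (at w)"
    and fM: "f ` U \<subseteq> M" and U: "open U"
  shows "(\<lambda>w. \<phi> (f w) $ i) holomorphic_on U"
  unfolding holomorphic_on_def
proof
  fix w assume w: "w \<in> U"
  obtain v where dv: "(f has_derivative (\<lambda>h. h *s v)) (at w)" using df by blast
  have "f w \<in> M" using fM w by blast
  then obtain L where dL: "(\<phi> has_derivative L) (at (f w))" and lin: "\<forall>c v. L (c *s v) = c *s L v"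
    using hol unfolding holomorphic_map_on_def by blast
  have "((\<lambda>w. \<phi> (f w)) has_derivative (\<lambda>h. L (h *s v))) (at w)"
    using has_derivative_compose[OF dv dL] .
  then have "((\<lambda>w. \<phi> (f w) $ i) has_derivative (\<lambda>h. L (h *s v) $ i)) (at w)"
    using bounded_linear.has_derivative[OF bounded_linear_vec_nth] by blast
  moreover have "(\<lambda>h. L (h *s v) $ i) = (*) (L v $ i)"
    using lin by (auto simp: mult.commute)
  ultimately have "((\<lambda>w. \<phi> (f w) $ i) has_field_derivative (L v $ i)) (at w)"
    by (simp add: has_field_derivative_def)
  then show "(\<lambda>w. \<phi> (f w) $ i) field_differentiable at w within U"
    unfolding field_differentiable_def by (blast intro: has_field_derivative_at_within)
qed

lemma key:
  fixes M :: "(complex^'n) set" and \<phi> :: "complex^'n \<Rightarrow> complex^'n"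
  assumes M: "open M" and a: "0 < a" and b: "0 < b"
    and emb: "holomorphic_embedding \<phi> M" and z: "z \<in> M" and \<phi>z: "\<phi> z = 0"
    and sub1: "ball 0 a \<subseteq> \<phi> ` M" and sub2: "\<phi> ` M \<subseteq> ball 0 b"
  shows "\<exists>S \<rho>. compact S \<and> S \<subseteq> M \<and> \<rho> > 0 \<and>
     (\<forall>f \<zeta> \<zeta>' s. (\<forall>w. \<exists>v. (f has_derivative (\<lambda>h. h *s v)) (at w)) \<and> f ` cball 0 1 \<subseteq> M \<and>
        0 \<le> s \<and> s < 1 \<and> cmod \<zeta> \<le> s \<and> cmod \<zeta>' \<le> s \<and>
        real CARD('n) * (2 * b / (1 - s)) * cmod (\<zeta> - \<zeta>') < a/4 \<and> dist (f \<zeta>') z < \<rho>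
        \<longrightarrow> f \<zeta> \<in> S)"
proof -
  have hol: "holomorphic_map_on \<phi> M" and inj: "inj_on \<phi> M"
    using emb by (auto simp: holomorphic_embedding_def)
  have cont: "continuous_on M \<phi>"
  proof (rule continuous_at_imp_continuous_on, intro ballI)
    fix x assume "x \<in> M"
    then obtain L where "(\<phi> has_derivative L) (at x)"
      using hol unfolding holomorphic_map_on_def by blast
    then show "isCont \<phi> x" by (rule has_derivative_continuous)
  qed
  define g where "g = inv_into M \<phi>"
  have gcont: "continuous_on (\<phi> ` M) g"
    unfolding g_def by (rule continuous_on_inverse_open[OF M cont]) (auto simp: inv_into_f_f[OF inj])
  define S where "S = g ` cball 0 (a/2)"
  have cb: "cball 0 (a/2) \<subseteq> \<phi> ` M" using sub1 a by (auto simp: subset_iff)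
  have Scomp: "compact S" unfolding S_def
    by (rule compact_continuous_image[OF continuous_on_subset[OF gcont cb] compact_cball])
  have SM: "S \<subseteq> M" unfolding S_def g_def using cb by (auto intro: inv_into_into)
  have "isCont \<phi> z" using cont M z by (simp add: continuous_on_eq_continuous_at)
  then obtain \<delta> where \<delta>: "\<delta> > 0" "\<And>y. dist y z < \<delta> \<Longrightarrow> dist (\<phi> y) (\<phi> z) < a/4"
    using a unfolding continuous_at_eps_delta by (metis zero_less_divide_iff zero_less_numeral)
  obtain \<epsilon> where \<epsilon>: "\<epsilon> > 0" "ball z \<epsilon> \<subseteq> M" using M z open_contains_ball by blast
  define \<rho> where "\<rho> = min \<delta> \<epsilon>"
  have \<rho>pos: "\<rho> > 0" using \<delta> \<epsilon> by (simp add: \<rho>_def)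
  have main: "f \<zeta> \<in> S" if df: "\<forall>w. \<exists>v. (f has_derivative (\<lambda>h. h *s v)) (at w)" and fM: "f ` cball 0 1 \<subseteq> M"
    and s: "0 \<le> s" "s < 1" and \<zeta>: "cmod \<zeta> \<le> s" "cmod \<zeta>' \<le> s"
    and small: "real CARD('n) * (2 * b / (1 - s)) * cmod (\<zeta> - \<zeta>') < a/4"
    and close: "dist (f \<zeta>') z < \<rho>" for f \<zeta> \<zeta>' s
  proof -
    have fz'M: "f \<zeta>' \<in> M" using close \<epsilon> by (auto simp: \<rho>_def dist_commute)
    have nz': "norm (\<phi> (f \<zeta>')) < a/4" using \<delta>(2)[of "f \<zeta>'"] close by (simp add: \<rho>_def \<phi>z)
    define r where "r = (1 - s) / 2"
    have r: "r > 0" using s by (simp add: r_def)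
    have fball: "f ` ball 0 1 \<subseteq> M" using fM by auto
    have Gb: "\<phi> (f w) $ i \<in> ball 0 b" if "w \<in> ball 0 1" for w i
    proof -
      have "\<phi> (f w) \<in> ball 0 b" using sub2 fball that by blast
      then have "norm (\<phi> (f w)) < b" by simp
      then show ?thesis using Finite_Cartesian_Product.norm_nth_le[of "\<phi> (f w)" i] by simp
    qed
    have dif: "cmod (\<phi> (f \<zeta>) $ i - \<phi> (f \<zeta>') $ i) \<le> (2 * b / (1 - s)) * cmod (\<zeta> - \<zeta>')" for i
    proof -
      let ?G = "\<lambda>w. \<phi> (f w) $ i"
      have holG: "?G holomorphic_on ball 0 1"
        by (rule comp_holo[OF hol]) (use df fball in auto)
      have db: "cmod (deriv ?G w) \<le> 2 * b / (1 - s)" if w: "w \<in> cball 0 s" for w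
      proof -
        have sub: "cball w r \<subseteq> ball 0 1"
        proof
          fix y assume "y \<in> cball w r"
          then have "cmod y \<le> cmod w + r" using norm_triangle_ineq2[of y w] by (auto simp: dist_norm norm_minus_commute)
          also have "\<dots> < 1" using w s unfolding r_def by (simp add: field_simps)
          finally show "y \<in> ball 0 1" by simp
        qed
        have "cmod ((deriv ^^ 1) ?G w) \<le> fact 1 * b / r ^ 1"
        proof (rule Cauchy_higher_deriv_bound[where y=0])
          show "?G holomorphic_on ball w r" using holomorphic_on_subset[OF holG] sub ball_subset_cball by blast
          show "continuous_on (cball w r) ?G" using holomorphic_on_imp_continuous_on[OF holomorphic_on_subset[OF holG sub]] .
          show "?G y \<in> ball 0 b" if "y \<in> ball w r" for y using Gb[of y] that sub ball_subset_cball by blast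
        qed (simp_all add: r)
        moreover have "fact 1 * b / r ^ 1 = 2 * b / (1 - s)" unfolding r_def by simp
        ultimately show ?thesis by simp
      qed
      show ?thesis
      proof (rule field_differentiable_bound[OF convex_cball])
        show "(?G has_field_derivative deriv ?G w) (at w within cball 0 s)" if "w \<in> cball 0 s" for w
          by (rule holomorphic_derivI[OF holG open_ball]) (use that s in auto)
        show "\<And>w. w \<in> cball 0 s \<Longrightarrow> cmod (deriv ?G w) \<le> 2 * b / (1 - s)" by (rule db)
        show "\<zeta> \<in> cball 0 s" "\<zeta>' \<in> cball 0 s" using \<zeta> by auto
      qed
    qed
    have "norm (\<phi> (f \<zeta>) - \<phi> (f \<zeta>')) \<le> (\<Sum>i\<in>UNIV. cmod ((\<phi> (f \<zeta>) - \<phi> (f \<zeta>')) $ i))"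
      by (rule norm_le_sum_cvec)
    also have "\<dots> \<le> (\<Sum>i\<in>(UNIV::'n set). (2 * b / (1 - s)) * cmod (\<zeta> - \<zeta>'))"
      by (rule sum_mono) (simp only: vector_minus_component dif)
    also have "\<dots> < a/4" using small by simp
    finally have "norm (\<phi> (f \<zeta>) - \<phi> (f \<zeta>')) < a/4" .
    then have "norm (\<phi> (f \<zeta>)) < a/2" using nz' norm_triangle_ineq2[of "\<phi> (f \<zeta>)" "\<phi> (f \<zeta>')"] by linarith
    moreover have "f \<zeta> \<in> M" using fM \<zeta> s by auto
    ultimately show ?thesis unfolding S_def g_def
      by (intro image_eqI[where x="\<phi> (f \<zeta>)"]) (simp_all add: inv_into_f_f[OF inj] less_imp_le)
  qed
  show ?thesis
  proof (intro exI conjI allI impI)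
    show "compact S" "S \<subseteq> M" "\<rho> > 0" using Scomp SM \<rho>pos by auto
    fix f \<zeta> \<zeta>' s
    assume H: "(\<forall>w. \<exists>v. (f has_derivative (\<lambda>h. h *s v)) (at w)) \<and> f ` cball 0 1 \<subseteq> M \<and>
        0 \<le> s \<and> s < 1 \<and> cmod \<zeta> \<le> s \<and> cmod \<zeta>' \<le> s \<and>
        real CARD('n) * (2 * b / (1 - s)) * cmod (\<zeta> - \<zeta>') < a/4 \<and> dist (f \<zeta>') z < \<rho>"
    then show "f \<zeta> \<in> S" by (elim conjE) (rule main)
  qed
qed



lemma kont:
  fixes M :: "(complex^'n) set" and F :: "real \<Rightarrow> complex \<Rightarrow> complex^'n"
  assumes M: "open M" and a: "0 < a" and b: "0 < b"
    and sq: "\<And>x. x \<in> M \<Longrightarrow> \<exists>\<phi>::complex^'n \<Rightarrow> complex^'n. holomorphic_embedding \<phi> M \<and> \<phi> x = 0 \<and> ball 0 a \<subseteq> \<phi> ` M \<and> \<phi> ` M \<subseteq> ball 0 b"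
    and hol: "\<And>t. \<forall>w. \<exists>v. (F t has_derivative (\<lambda>h. h *s v)) (at w)"
    and C: "0 \<le> C" and lip: "\<And>t t' w. cmod w \<le> 1 \<Longrightarrow> dist (F t w) (F t' w) \<le> C * \<bar>t - t'\<bar>"
    and F0: "F 0 ` cball 0 1 \<subseteq> M"
    and bd: "\<And>t. t \<in> {0..1} \<Longrightarrow> F t ` sphere 0 1 \<subseteq> M"
  shows "F 1 ` cball 0 1 \<subseteq> M"
proof -
  have contF: "continuous_on X (F t)" for t X
  proof (rule continuous_at_imp_continuous_on, intro ballI)
    fix x
    obtain v where "(F t has_derivative (\<lambda>h. h *s v)) (at x)" using hol by blast
    then show "isCont (F t) x" by (rule has_derivative_continuous)
  qed
  define T where "T = {t \<in> {0..1}. F t ` cball 0 1 \<subseteq> M}"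
  have op: "openin (top_of_set {0..1}) T"
    unfolding openin_euclidean_subtopology_iff
  proof (intro conjI ballI)
    show "T \<subseteq> {0..1}" by (auto simp: T_def)
    fix t0 assume t0: "t0 \<in> T"
    have "compact (F t0 ` cball 0 1)" by (rule compact_continuous_image[OF contF compact_cball])
    moreover have "F t0 ` cball 0 1 \<subseteq> M" using t0 by (auto simp: T_def)
    ultimately obtain \<epsilon> where \<epsilon>: "\<epsilon> > 0" "(\<Union>x\<in>F t0 ` cball 0 1. ball x \<epsilon>) \<subseteq> M"
      by (rule compact_subset_open_imp_ball_epsilon_subset[OF _ M])
    show "\<exists>e>0. \<forall>x'\<in>{0..1}. dist x' t0 < e \<longrightarrow> x' \<in> T"
    proof (intro exI conjI ballI impI)
      show "\<epsilon> / (C + 1) > 0" using \<epsilon> C by simp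
      fix t' assume t': "t' \<in> {0..1}" "dist t' t0 < \<epsilon> / (C + 1)"
      have "F t' w \<in> M" if w: "w \<in> cball 0 1" for w
      proof -
        have "dist (F t0 w) (F t' w) \<le> C * \<bar>t0 - t'\<bar>" using lip w by simp
        also have "\<dots> \<le> C * (\<epsilon> / (C + 1))" using t' C by (intro mult_left_mono) (auto simp: dist_real_def)
        also have "\<dots> < \<epsilon>" using C \<epsilon> by (simp add: field_simps)
        finally have "F t' w \<in> ball (F t0 w) \<epsilon>" by simp
        then show ?thesis using \<epsilon>(2) w by blast
      qed
      then show "t' \<in> T" using t' by (auto simp: T_def)
    qed
  qed
  have cl: "closedin (top_of_set {0..1}) T"
    unfolding closedin_limpt
  proof (intro conjI allI impI)
    show "T \<subseteq> {0..1}" by (auto simp: T_def)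
    fix t0 assume "t0 islimpt T \<and> t0 \<in> {0..1}"
    then have lim: "t0 islimpt T" and t01: "t0 \<in> {0..1}" by auto
    have approx: "\<exists>t\<in>T. \<bar>t - t0\<bar> < e" if "e > 0" for e
      using lim that unfolding islimpt_approachable by (auto simp: dist_real_def)
    define A where "A = cball 0 1 \<inter> F t0 -` M"
    have Aop: "openin (top_of_set (cball 0 1)) A"
      unfolding A_def by (rule continuous_openin_preimage_gen[OF contF M])
    have Acl: "closedin (top_of_set (cball 0 1)) A"
      unfolding closedin_limpt
    proof (intro conjI allI impI)
      show "A \<subseteq> cball 0 1" by (auto simp: A_def)
      fix \<zeta> assume "\<zeta> islimpt A \<and> \<zeta> \<in> cball 0 1"
      then have limz: "\<zeta> islimpt A" and \<zeta>1: "cmod \<zeta> \<le> 1" by auto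
      show "\<zeta> \<in> A"
      proof (cases "cmod \<zeta> = 1")
        case True
        then show ?thesis using bd[OF t01] by (auto simp: A_def)
      next
        case False
        then have \<zeta>lt: "cmod \<zeta> < 1" using \<zeta>1 by simp
        define s where "s = (1 + cmod \<zeta>) / 2"
        have s: "0 \<le> s" "s < 1" "cmod \<zeta> < s" using \<zeta>lt by (auto simp: s_def)
        define K0 where "K0 = real CARD('n) * (2 * b / (1 - s))"
        have K0: "K0 > 0" using s b by (simp add: K0_def)
        define \<eta> where "\<eta> = min (s - cmod \<zeta>) (a / (4 * K0))"
        have \<eta>: "\<eta> > 0" using s K0 a by (simp add: \<eta>_def)
        obtain \<zeta>' where \<zeta>': "\<zeta>' \<in> A" "dist \<zeta>' \<zeta> < \<eta>"
          using limz \<eta> unfolding islimpt_approachable by blast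
        have \<zeta>'s: "cmod \<zeta>' \<le> s"
        proof -
          have "cmod \<zeta>' \<le> cmod \<zeta> + dist \<zeta>' \<zeta>" using norm_triangle_ineq2[of \<zeta>' \<zeta>] by (simp add: dist_norm)
          then show ?thesis using \<zeta>'(2) by (simp add: \<eta>_def)
        qed
        have small: "real CARD('n) * (2 * b / (1 - s)) * cmod (\<zeta> - \<zeta>') < a/4"
        proof -
          have "cmod (\<zeta> - \<zeta>') < a / (4 * K0)" using \<zeta>'(2) by (simp add: \<eta>_def dist_norm norm_minus_commute)
          then have "K0 * cmod (\<zeta> - \<zeta>') < K0 * (a / (4 * K0))" using K0 by (rule mult_strict_left_mono)
          also have "\<dots> = a/4" using K0 by simp
          finally show ?thesis by (simp add: K0_def)
        qed
        define z where "z = F t0 \<zeta>'"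
        have zM: "z \<in> M" using \<zeta>' by (simp add: A_def z_def)
        obtain \<phi> :: "complex^'n \<Rightarrow> complex^'n" where \<phi>0: "holomorphic_embedding \<phi> M \<and> \<phi> z = 0 \<and> ball 0 a \<subseteq> \<phi> ` M \<and> \<phi> ` M \<subseteq> ball 0 b"
          using sq[OF zM] by (elim exE) (rule that)
        then have \<phi>: "holomorphic_embedding \<phi> M" "\<phi> z = 0" "ball 0 a \<subseteq> \<phi> ` M" "\<phi> ` M \<subseteq> ball 0 b"
          by auto
        obtain S \<rho> where SS: "compact S \<and> S \<subseteq> M \<and> \<rho> > 0 \<and> (\<forall>f \<zeta> \<zeta>' s. (\<forall>w. \<exists>v. (f has_derivative (\<lambda>h. h *s v)) (at w)) \<and> f ` cball 0 1 \<subseteq> M \<and>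
            0 \<le> s \<and> s < 1 \<and> cmod \<zeta> \<le> s \<and> cmod \<zeta>' \<le> s \<and>
            real CARD('n) * (2 * b / (1 - s)) * cmod (\<zeta> - \<zeta>') < a/4 \<and> dist (f \<zeta>') z < \<rho>
            \<longrightarrow> f \<zeta> \<in> S)"
          using key[OF M a b \<phi>(1) zM \<phi>(2-4)] by (elim exE) (rule that)
        then have S: "compact S" "S \<subseteq> M" "\<rho> > 0" by auto
        from SS have Sprop: "\<forall>f \<zeta> \<zeta>' s. (\<forall>w. \<exists>v. (f has_derivative (\<lambda>h. h *s v)) (at w)) \<and> f ` cball 0 1 \<subseteq> M \<and>
            0 \<le> s \<and> s < 1 \<and> cmod \<zeta> \<le> s \<and> cmod \<zeta>' \<le> s \<and>
            real CARD('n) * (2 * b / (1 - s)) * cmod (\<zeta> - \<zeta>') < a/4 \<and> dist (f \<zeta>') z < \<rho>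
            \<longrightarrow> f \<zeta> \<in> S" by (elim conjE)
        have "F t0 \<zeta> \<in> S"
        proof (rule ccontr)
          assume nS: "F t0 \<zeta> \<notin> S"
          have "open (- S)" using S(1) by (simp add: compact_imp_closed open_Compl)
          then obtain \<epsilon> where \<epsilon>: "\<epsilon> > 0" "ball (F t0 \<zeta>) \<epsilon> \<subseteq> - S"
            using nS open_contains_ball by blast
          define e where "e = min \<epsilon> \<rho> / (C + 1)"
          have e: "e > 0" using \<epsilon> S C by (simp add: e_def)
          obtain t where t: "t \<in> T" "\<bar>t - t0\<bar> < e" using approx[OF e] by blast
          have Ce: "C * \<bar>t - t0\<bar> < min \<epsilon> \<rho>"
          proof -
            have "C * \<bar>t - t0\<bar> \<le> C * e" using t C by (intro mult_left_mono) auto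
            also have "\<dots> = (C / (C + 1)) * min \<epsilon> \<rho>" by (simp add: e_def)
            also have "\<dots> < 1 * min \<epsilon> \<rho>"
              by (rule mult_strict_right_mono) (use C \<epsilon> S in auto)
            finally show ?thesis by simp
          qed
          have d1: "dist (F t \<zeta>') z < \<rho>"
            using lip[of \<zeta>' t t0] \<zeta>'s s Ce by (simp add: z_def)
          have "F t \<zeta> \<in> S"
            by (rule Sprop[rule_format, of "F t" s \<zeta> \<zeta>']) (use hol t d1 small s \<zeta>'s in \<open>auto simp: T_def\<close>)
          moreover have "dist (F t0 \<zeta>) (F t \<zeta>) < \<epsilon>"
            using lip[of \<zeta> t0 t] \<zeta>1 Ce by (simp add: abs_minus_commute)
          ultimately show False using \<epsilon>(2) by auto
        qed
        then show ?thesis using S(2) \<zeta>1 by (auto simp: A_def)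
      qed
    qed
    have "A \<noteq> {}"
    proof -
      have "F t0 1 \<in> M" using bd[OF t01] by auto
      then have "1 \<in> A" by (simp add: A_def)
      then show ?thesis by blast
    qed
    then have "A = cball 0 1" using connected_clopen[THEN iffD1, OF connected_cball, rule_format, OF conjI[OF Aop Acl]] by simp
    then show "t0 \<in> T" using t01 by (auto simp: T_def A_def)
  qed
  have "0 \<in> T" using F0 by (simp add: T_def)
  then have "T = {0..1}" using connected_clopen[THEN iffD1, OF connected_Icc, rule_format, OF conjI[OF op cl]] by auto
  then have "1 \<in> T" by simp
  then show ?thesis by (simp add: T_def)
qed



lemma int_cis_pow:
  "((\<lambda>t. cis t ^ k) has_integral (if k = 0 then of_real (2*pi) else 0)) {0..2*pi}"
proof (cases "k = 0")
  case True
  then show ?thesis using has_integral_const_real[of "1::complex" 0 "2*pi"]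
    by (simp add: scaleR_conv_of_real)
next
  case False
  define a where "a = \<i> * of_nat k"
  have a: "a \<noteq> 0" using False by (simp add: a_def)
  have eq: "cis t ^ k = exp (a * of_real t)" for t
  proof -
    have "cis t ^ k = cis (real k * t)" by (rule Complex.DeMoivre)
    also have "\<dots> = exp (a * of_real t)" unfolding cis_conv_exp a_def by (simp add: mult_ac)
    finally show ?thesis .
  qed
  have "\<And>t. t \<in> {0..2*pi} \<Longrightarrow> ((\<lambda>x. exp (a * x) / a) has_vector_derivative exp (a * t)) (at t within {0..2*pi})"
    using a
    by (intro derivative_eq_intros has_complex_derivative_imp_has_vector_derivative [unfolded o_def] | simp)+
  then have "((\<lambda>t. exp(a * of_real t)) has_integral exp(a * complex_of_real (2*pi))/a - exp(a * of_real 0)/a) {0..2*pi}"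
    by (meson fundamental_theorem_of_calculus pi_ge_zero mult_nonneg_nonneg zero_le_numeral)
  moreover have "exp(a * complex_of_real (2*pi)) = 1"
  proof -
    have "a * complex_of_real (2*pi) = of_nat k * (2 * of_real pi * \<i>)" by (simp add: a_def mult_ac)
    then have "exp(a * complex_of_real (2*pi)) = exp (2 * of_real pi * \<i>) ^ k" by (simp only: exp_of_nat_mult)
    then show ?thesis by simp
  qed
  ultimately show ?thesis using False by (simp add: eq)
qed

lemma mean_poly_aux:
  "\<forall>k. ((\<lambda>t. cis t ^ k * poly p (cis t)) has_integral (if k = 0 then of_real (2*pi) * poly p 0 else 0)) {0..2*pi}"
proof (induction p)
  case 0
  then show ?case by simp
next
  case (pCons c p)
  show ?case
  proof
    fix k
    have eq: "cis t ^ k * poly (pCons c p) (cis t) = c * cis t ^ k + cis t ^ Suc k * poly p (cis t)" for t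
      by (simp add: algebra_simps)
    have "((\<lambda>t. c * cis t ^ k + cis t ^ Suc k * poly p (cis t)) has_integral
           (c * (if k = 0 then of_real (2*pi) else 0) + 0)) {0..2*pi}"
      by (rule has_integral_add[OF has_integral_mult_right[OF int_cis_pow]]) (use pCons.IH[rule_format, of "Suc k"] in simp)
    moreover have v: "c * (if k = 0 then of_real (2*pi) else 0) + 0 = (if k = 0 then of_real (2*pi) * poly (pCons c p) 0 else 0)"
      by simp
    ultimately show "((\<lambda>t. cis t ^ k * poly (pCons c p) (cis t)) has_integral
           (if k = 0 then of_real (2*pi) * poly (pCons c p) 0 else 0)) {0..2*pi}"
      by (simp only: eq)
  qed
qed

lemma mean_poly:
  "((\<lambda>t. Re (poly p (cis t))) has_integral (2*pi * Re (poly p 0))) {0..2*pi}"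
proof -
  have "((\<lambda>t. poly p (cis t)) has_integral (of_real (2*pi) * poly p 0)) {0..2*pi}"
    using spec[OF mean_poly_aux[of p], of 0] by simp
  from has_integral_linear[OF this bounded_linear_Re] show ?thesis by (simp add: o_def)
qed



lemma cnj_mult_unit: "cmod z = 1 \<Longrightarrow> cnj z * z = 1"
  using complex_norm_square[of z] by (simp add: mult.commute)

lemma re_prod_cnj:
  "\<forall>p. \<exists>r. \<forall>z\<in>sphere (0::complex) 1. Re (poly p z * poly s (cnj z)) = Re (poly r z)"
proof (induction s)
  case 0
  show ?case by (auto intro: exI[of _ 0])
next
  case (pCons c s)
  show ?case
  proof
    fix p :: "complex poly"
    obtain p0 p1 where p: "p = pCons p0 p1" by (cases p)
    obtain r1 where r1: "\<forall>z\<in>sphere (0::complex) 1. Re (poly p1 z * poly s (cnj z)) = Re (poly r1 z)"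
      using pCons.IH by blast
    define r where "r = smult c p + smult (cnj p0) (pCons 0 (map_poly cnj s)) + r1"
    have "Re (poly p z * poly (pCons c s) (cnj z)) = Re (poly r z)" if z: "z \<in> sphere 0 1" for z
    proof -
      define P where "P = poly s (cnj z)"
      have zz: "cnj z * z = 1" using z by (simp add: cnj_mult_unit)
      have pz: "poly p z = p0 + z * poly p1 z" by (simp add: p)
      have "poly p z * poly (pCons c s) (cnj z) = poly p z * (c + cnj z * P)"
        by (simp add: P_def)
      also have "\<dots> = c * poly p z + p0 * cnj z * P + (cnj z * z) * (poly p1 z * P)"
        unfolding pz by algebra
      also have "\<dots> = c * poly p z + p0 * cnj z * P + poly p1 z * P"
        by (simp only: zz mult_1_left)
      finally have eq: "poly p z * poly (pCons c s) (cnj z) = c * poly p z + p0 * cnj z * P + poly p1 z * P" .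
      have r1z: "Re (poly p1 z * P) = Re (poly r1 z)" using r1 z by (simp add: P_def)
      have m: "Re (p0 * cnj z * P) = Re (poly (smult (cnj p0) (pCons 0 (map_poly cnj s))) z)"
      proof -
        have rc: "Re (cnj w) = Re w" for w by simp
        have "Re (p0 * cnj z * P) = Re (cnj (p0 * cnj z * P))" by (rule rc[symmetric])
        also have "cnj (p0 * cnj z * P) = poly (smult (cnj p0) (pCons 0 (map_poly cnj s))) z"
          by (simp add: P_def)
        finally show ?thesis .
      qed
      have "Re (poly p z * poly (pCons c s) (cnj z)) = Re (c * poly p z) + Re (p0 * cnj z * P) + Re (poly p1 z * P)"
        unfolding eq by simp
      also have "\<dots> = Re (poly r z)" unfolding m r1z r_def by simp
      finally show ?thesis .
    qed
    then show "\<exists>r. \<forall>z\<in>sphere 0 1. Re (poly p z * poly (pCons c s) (cnj z)) = Re (poly r z)" by blast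
  qed
qed

lemma re_prod:
  "\<exists>r. \<forall>z\<in>sphere (0::complex) 1. Re (poly p z) * Re (poly q z) = Re (poly r z)"
proof -
  obtain r1 where r1: "\<forall>z\<in>sphere (0::complex) 1. Re (poly p z * poly (map_poly cnj q) (cnj z)) = Re (poly r1 z)"
    using re_prod_cnj by blast
  have "Re (poly p z) * Re (poly q z) = Re (poly (smult (1/2) (p * q + r1)) z)" if z: "z \<in> sphere 0 1" for z
  proof -
    have "Re (poly p z) * Re (poly q z) = (Re (poly p z * poly q z) + Re (poly p z * cnj (poly q z))) / 2"
      by (simp add: algebra_simps)
    also have "cnj (poly q z) = poly (map_poly cnj q) (cnj z)" by simp
    also have "Re (poly p z * poly (map_poly cnj q) (cnj z)) = Re (poly r1 z)" using r1 z by blast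
    finally show ?thesis by simp
  qed
  then show ?thesis by blast
qed

definition PR :: "(complex \<Rightarrow> real) set" where
  "PR = {f. continuous_on (sphere 0 1) f \<and> (\<exists>p. \<forall>z\<in>sphere 0 1. f z = Re (poly p z))}"

lemma PR_ring: "function_ring_on PR (sphere 0 1)"
proof
  show "compact (sphere (0::complex) 1)" by simp
  show "continuous_on (sphere 0 1) f" if "f \<in> PR" for f using that by (simp add: PR_def)
  show "(\<lambda>x. f x + g x) \<in> PR" if fg: "f \<in> PR" "g \<in> PR" for f g
  proof -
    obtain p q where "\<forall>z\<in>sphere 0 1. f z = Re (poly p z)" "\<forall>z\<in>sphere 0 1. g z = Re (poly q z)"
      using fg by (auto simp: PR_def)
    then have eq: "\<forall>z\<in>sphere 0 1. f z + g z = Re (poly (p + q) z)" by simp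
    have "continuous_on (sphere 0 1) (\<lambda>x. f x + g x)" using fg by (auto simp: PR_def intro!: continuous_intros)
    then show ?thesis unfolding PR_def using eq by blast
  qed
  show "(\<lambda>x. f x * g x) \<in> PR" if fg: "f \<in> PR" "g \<in> PR" for f g
  proof -
    obtain p q where pq: "\<forall>z\<in>sphere 0 1. f z = Re (poly p z)" "\<forall>z\<in>sphere 0 1. g z = Re (poly q z)"
      using fg by (auto simp: PR_def)
    obtain r where "\<forall>z\<in>sphere (0::complex) 1. Re (poly p z) * Re (poly q z) = Re (poly r z)"
      using re_prod by blast
    then have eq: "\<forall>z\<in>sphere 0 1. f z * g z = Re (poly r z)" using pq by simp
    have "continuous_on (sphere 0 1) (\<lambda>x. f x * g x)" using fg by (auto simp: PR_def intro!: continuous_intros)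
    then show ?thesis unfolding PR_def using eq by blast
  qed
  show "(\<lambda>_. c) \<in> PR" for c
    unfolding PR_def by (auto intro!: exI[of _ "[:of_real c:]"])
  show "\<exists>f\<in>PR. f x \<noteq> f y" if "x \<in> sphere 0 1" "y \<in> sphere 0 1" "x \<noteq> y" for x y
  proof (cases "Re x = Re y")
    case True
    then have "Im x \<noteq> Im y" using that(3) complex_eqI by blast
    moreover have "(\<lambda>z. Im z) \<in> PR"
      unfolding PR_def by (auto intro!: exI[of _ "[:0, -\<i>:]"] continuous_intros)
    ultimately show ?thesis by blast
  next
    case False
    moreover have "(\<lambda>z. Re z) \<in> PR"
      unfolding PR_def by (auto intro!: exI[of _ "[:0, 1:]"] continuous_intros)
    ultimately show ?thesis by blast
  qed
qed

lemma approx_poly: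
  assumes "continuous_on (sphere 0 1) V" "e > 0"
  shows "\<exists>p::complex poly. \<forall>z\<in>sphere 0 1. \<bar>V z - Re (poly p z)\<bar> < e"
proof -
  obtain F where F: "F \<in> UNIV \<rightarrow> PR" and lim: "uniform_limit (sphere 0 1) F V sequentially"
    using function_ring_on.Stone_Weierstrass[OF PR_ring assms(1)] by blast
  have "\<forall>\<^sub>F n in sequentially. \<forall>x\<in>sphere 0 1. dist (F n x) (V x) < e"
    using uniform_limitD[OF lim assms(2)] .
  then obtain N where N: "\<forall>n\<ge>N. \<forall>x\<in>sphere 0 1. dist (F n x) (V x) < e"
    unfolding eventually_sequentially by blast
  define n where "n = N"
  have n: "\<forall>x\<in>sphere 0 1. dist (F n x) (V x) < e" using N by (simp add: n_def)
  have "F n \<in> PR" using F by blast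
  then obtain p where p: "\<forall>z\<in>sphere 0 1. F n z = Re (poly p z)" by (auto simp: PR_def)
  show ?thesis using n p by (intro exI[of _ p]) (auto simp: dist_real_def abs_minus_commute)
qed



lemma disc_deriv:
  "((\<lambda>\<zeta>. a0 + (of_real r * \<zeta>) *s w + (of_real t * exp (- poly p \<zeta>)) *s (\<xi>::complex^'n))
     has_derivative (\<lambda>h. h *s (of_real r *s w + (of_real t * (exp (- poly p \<zeta>) * - poly (pderiv p) \<zeta>)) *s \<xi>))) (at \<zeta>)"
proof -
  have d1: "((\<lambda>\<zeta>. (of_real r * \<zeta>) *s w) has_derivative (\<lambda>h. h *s (of_real r *s w))) (at \<zeta>)"
    by (rule has_derivative_smult_cvec) (auto intro!: derivative_eq_intros)
  have "((\<lambda>\<zeta>. of_real t * exp (- poly p \<zeta>)) has_field_derivative (of_real t * (exp (- poly p \<zeta>) * - poly (pderiv p) \<zeta>))) (at \<zeta>)"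
    by (auto intro!: derivative_eq_intros poly_DERIV)
  then have d2: "((\<lambda>\<zeta>. (of_real t * exp (- poly p \<zeta>)) *s \<xi>) has_derivative
      (\<lambda>h. h *s ((of_real t * (exp (- poly p \<zeta>) * - poly (pderiv p) \<zeta>)) *s \<xi>))) (at \<zeta>)"
    by (rule has_derivative_smult_cvec)
  have "((\<lambda>\<zeta>. a0 + (of_real r * \<zeta>) *s w + (of_real t * exp (- poly p \<zeta>)) *s \<xi>) has_derivative
      (\<lambda>h. 0 + h *s (of_real r *s w) + h *s ((of_real t * (exp (- poly p \<zeta>) * - poly (pderiv p) \<zeta>)) *s \<xi>))) (at \<zeta>)"
    by (intro has_derivative_add has_derivative_const d1 d2)
  then show ?thesis by (simp add: vector_add_ldistrib)
qed

lemma claim1: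
  fixes M :: "(complex^'n) set" and w :: "complex^'n"
  assumes M: "open M" and nM: "-M \<noteq> {}" and a: "0 < a" and b: "0 < b"
    and sq: "\<And>x. x \<in> M \<Longrightarrow> \<exists>\<phi>::complex^'n \<Rightarrow> complex^'n. holomorphic_embedding \<phi> M \<and> \<phi> x = 0 \<and> ball 0 a \<subseteq> \<phi> ` M \<and> \<phi> ` M \<subseteq> ball 0 b"
    and a0: "a0 \<in> M" and r: "0 < r" and disc: "\<forall>\<zeta>::complex. cmod \<zeta> \<le> r \<longrightarrow> a0 + \<zeta> *s w \<in> M"
    and e: "e > 0"
    and p: "\<forall>z\<in>sphere 0 1. \<bar>- ln (infdist (a0 + (of_real r * z) *s w) (-M)) - Re (poly p z)\<bar> < e"
  shows "- ln (infdist a0 (-M)) \<le> Re (poly p 0) + e"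
proof -
  have clM: "closed (-M)" using M by (simp add: closed_Compl)
  have dpos: "infdist y (-M) > 0" if "y \<in> M" for y
    using infdist_pos_not_in_closed[OF clM nM] that by simp
  have notin: "y \<in> M" if "y0 \<in> M" "dist y0 y < infdist y0 (-M)" for y0 y
  proof (rule ccontr)
    assume "y \<notin> M"
    then have "infdist y0 (-M) \<le> dist y0 y" by (intro infdist_le) simp
    then show False using that by simp
  qed
  obtain B where B: "\<forall>\<zeta>\<in>cball 0 1. cmod (exp (- poly p \<zeta>)) \<le> B"
  proof -
    have "compact ((\<lambda>\<zeta>. exp (- poly p \<zeta>)) ` cball 0 1)"
      by (rule compact_continuous_image) (auto intro!: continuous_intros)
    then have "bounded ((\<lambda>\<zeta>. exp (- poly p \<zeta>)) ` cball 0 1)" by (rule compact_imp_bounded)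
    then obtain B where "\<forall>x\<in>(\<lambda>\<zeta>. exp (- poly p \<zeta>)) ` cball 0 1. norm x \<le> B"
      unfolding bounded_iff by blast
    then show ?thesis using that by auto
  qed
  define C where "C = max B 0"
  have C: "0 \<le> C" by (simp add: C_def)
  have Fin: "a0 + exp (- poly p 0) *s \<xi> \<in> M" if \<xi>: "norm \<xi> < exp (- e)" for \<xi>
  proof -
    define F where "F = (\<lambda>t::real. \<lambda>\<zeta>. a0 + (of_real r * \<zeta>) *s w + (of_real t * exp (- poly p \<zeta>)) *s \<xi>)"
    have \<xi>1: "norm \<xi> \<le> 1" using \<xi> e by (meson exp_le_one_iff less_imp_le neg_le_0_iff_le order.trans)
    have "F 1 ` cball 0 1 \<subseteq> M"
    proof (rule kont[OF M a b sq])
      show "\<forall>w'. \<exists>v. (F t has_derivative (\<lambda>h. h *s v)) (at w')" for t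
        unfolding F_def using disc_deriv by blast
      show "0 \<le> C" by (rule C)
      show "dist (F t \<zeta>) (F t' \<zeta>) \<le> C * \<bar>t - t'\<bar>" if "cmod \<zeta> \<le> 1" for t t' \<zeta>
      proof -
        have "F t \<zeta> - F t' \<zeta> = (of_real t * exp (- poly p \<zeta>)) *s \<xi> - (of_real t' * exp (- poly p \<zeta>)) *s \<xi>"
          by (simp add: F_def)
        also have "\<dots> = (of_real t * exp (- poly p \<zeta>) - of_real t' * exp (- poly p \<zeta>)) *s \<xi>"
          by (rule vector_sub_rdistrib[symmetric])
        also have "of_real t * exp (- poly p \<zeta>) - of_real t' * exp (- poly p \<zeta>) = of_real (t - t') * exp (- poly p \<zeta>)"
          by (simp add: left_diff_distrib)
        finally have "F t \<zeta> - F t' \<zeta> = (of_real (t - t') * exp (- poly p \<zeta>)) *s \<xi>" .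
        then have eqd: "dist (F t \<zeta>) (F t' \<zeta>) = \<bar>t - t'\<bar> * cmod (exp (- poly p \<zeta>)) * norm \<xi>"
          by (simp add: dist_norm norm_smult_cvec norm_mult del: of_real_diff)
        have Bz: "cmod (exp (- poly p \<zeta>)) \<le> C"
        proof -
          have "\<zeta> \<in> cball 0 1" using that by simp
          then have "cmod (exp (- poly p \<zeta>)) \<le> B" using B by blast
          then show ?thesis by (simp add: C_def)
        qed
        have "dist (F t \<zeta>) (F t' \<zeta>) \<le> \<bar>t - t'\<bar> * C * 1"
          unfolding eqd using Bz \<xi>1 C by (intro mult_mono mult_left_mono) auto
        then show ?thesis by (simp add: mult.commute)
      qed
      show "F 0 ` cball 0 1 \<subseteq> M"
      proof
        fix y assume "y \<in> F 0 ` cball 0 1"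
        then obtain \<zeta> where \<zeta>: "cmod \<zeta> \<le> 1" "y = F 0 \<zeta>" by auto
        have "cmod (of_real r * \<zeta>) \<le> r" using r \<zeta> by (simp add: norm_mult mult_le_cancel_left1)
        then show "y \<in> M" using disc \<zeta> by (simp add: F_def)
      qed
      show "F t ` sphere 0 1 \<subseteq> M" if t: "t \<in> {0..1}" for t
      proof
        fix y assume "y \<in> F t ` sphere 0 1"
        then obtain \<zeta> where \<zeta>: "cmod \<zeta> = 1" "y = F t \<zeta>" by auto
        define y0 where "y0 = a0 + (of_real r * \<zeta>) *s w"
        have y0: "y0 \<in> M" using disc r \<zeta> by (simp add: y0_def norm_mult)
        define d0 where "d0 = infdist y0 (-M)"
        have d0: "d0 > 0" using dpos[OF y0] by (simp add: d0_def)
        have "\<bar>- ln d0 - Re (poly p \<zeta>)\<bar> < e" using p \<zeta> by (simp add: d0_def y0_def)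
        then have "- Re (poly p \<zeta>) < ln d0 + e" by linarith
        then have "exp (- Re (poly p \<zeta>)) < exp (ln d0 + e)" by simp
        also have "\<dots> = d0 * exp e" using d0 by (simp add: exp_add)
        finally have ex: "exp (- Re (poly p \<zeta>)) < d0 * exp e" .
        have "dist y0 y = norm ((of_real t * exp (- poly p \<zeta>)) *s \<xi>)"
          by (simp add: \<zeta> F_def y0_def dist_norm)
        also have "\<dots> = t * exp (- Re (poly p \<zeta>)) * norm \<xi>"
          using t by (simp add: norm_smult_cvec norm_mult norm_exp_eq_Re)
        also have "\<dots> \<le> exp (- Re (poly p \<zeta>)) * norm \<xi>"
          using t by (intro mult_right_mono) (auto intro: mult_le_one)
        also have "\<dots> \<le> exp (- Re (poly p \<zeta>)) * exp (- e)"
          using \<xi> by (intro mult_left_mono) auto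
        also have "\<dots> < d0 * exp e * exp (- e)"
          using ex by (intro mult_strict_right_mono) auto
        also have "\<dots> = d0" by (simp add: exp_minus)
        finally have "dist y0 y < infdist y0 (-M)" by (simp add: d0_def)
        then show "y \<in> M" using notin[OF y0] by blast
      qed
    qed
    then have "F 1 0 \<in> M" by auto
    then show ?thesis by (simp add: F_def)
  qed
  define R where "R = exp (- e) * exp (- Re (poly p 0))"
  have R: "R > 0" by (simp add: R_def)
  have "R \<le> infdist a0 (-M)"
    unfolding infdist_notempty[OF nM]
  proof (rule cINF_greatest[OF nM])
    fix y assume y: "y \<in> -M"
    show "R \<le> dist a0 y"
    proof (rule ccontr)
      assume "\<not> R \<le> dist a0 y"
      then have lt: "dist a0 y < R" by simp
      define \<xi> where "\<xi> = exp (poly p 0) *s (y - a0)"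
      have "norm \<xi> = exp (Re (poly p 0)) * dist a0 y"
        unfolding \<xi>_def norm_smult_cvec by (simp add: norm_exp_eq_Re dist_norm norm_minus_commute)
      also have "\<dots> < exp (Re (poly p 0)) * R" using lt by simp
      also have "\<dots> = exp (- e)" by (simp add: R_def exp_minus)
      finally have "a0 + exp (- poly p 0) *s \<xi> \<in> M" by (rule Fin)
      moreover have "a0 + exp (- poly p 0) *s \<xi> = y"
        by (simp add: \<xi>_def vector_smult_assoc exp_minus)
      ultimately show False using y by simp
    qed
  qed
  then have "ln R \<le> ln (infdist a0 (-M))" using R by simp
  moreover have "ln R = - e - Re (poly p 0)" by (simp add: R_def ln_mult)
  ultimately show ?thesis by simp
qed



theorem lemma2:
  fixes M :: "(complex ^ 'n) set"
  assumes "domain M" and "bounded M" and "uniform_squeezing M"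
  shows "pseudoconvex M"
proof -
  have M: "open M" using assms(1) by (simp add: domain_def)
  have nM: "-M \<noteq> {}"
  proof
    assume "-M = {}"
    then have "M = UNIV" by auto
    then show False using assms(2) by simp
  qed
  obtain a b :: real where ab: "0 < a" "a < b" and sqM: "\<forall>x\<in>M. \<exists>\<phi> :: complex ^ 'n \<Rightarrow> complex ^ 'n.
            holomorphic_embedding \<phi> M \<and> \<phi> x = 0 \<and> ball 0 a \<subseteq> \<phi> ` M \<and> \<phi> ` M \<subseteq> ball 0 b"
    using assms(3) unfolding uniform_squeezing_def by blast
  have b: "0 < b" using ab by simp
  have sq: "\<And>x. x \<in> M \<Longrightarrow> \<exists>\<phi>::complex^'n \<Rightarrow> complex^'n. holomorphic_embedding \<phi> M \<and> \<phi> x = 0 \<and> ball 0 a \<subseteq> \<phi> ` M \<and> \<phi> ` M \<subseteq> ball 0 b"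
    using sqM by blast
  have clM: "closed (-M)" using M by (simp add: closed_Compl)
  have dpos: "infdist y (-M) > 0" if "y \<in> M" for y
    using infdist_pos_not_in_closed[OF clM nM] that by simp
  have ucont: "continuous_on M (\<lambda>z. - ln (infdist z (- M)))"
    using dpos by (auto intro!: continuous_intros simp: less_imp_neq[symmetric])
  show ?thesis
    unfolding pseudoconvex_def plurisubharmonic_on_def
  proof (intro conjI allI impI ucont)
    fix a0 w r
    assume H: "a0 \<in> M \<and> 0 < r \<and> (\<forall>\<zeta>::complex. cmod \<zeta> \<le> r \<longrightarrow> a0 + \<zeta> *s w \<in> M)"
    then have a0: "a0 \<in> M" and r: "0 < r" and disc: "\<forall>\<zeta>::complex. cmod \<zeta> \<le> r \<longrightarrow> a0 + \<zeta> *s w \<in> M"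
      by auto
    define V where "V = (\<lambda>z. - ln (infdist (a0 + (of_real r * z) *s w) (- M)))"
    define I where "I = integral {0..2*pi} (\<lambda>t. - ln (infdist (a0 + (of_real r * cis t) *s w) (- M)))"
    have gcont: "continuous_on X (\<lambda>z. a0 + (of_real r * z) *s w)" for X
    proof (rule continuous_at_imp_continuous_on, intro ballI)
      fix z
      have "((\<lambda>z. (of_real r * z) *s w) has_derivative (\<lambda>h. h *s (of_real r *s w))) (at z)"
        by (rule has_derivative_smult_cvec) (auto intro!: derivative_eq_intros)
      then have "isCont (\<lambda>z. (of_real r * z) *s w) z" by (rule has_derivative_continuous)
      then show "isCont (\<lambda>z. a0 + (of_real r * z) *s w) z" by (intro continuous_intros)
    qed
    have gM: "(\<lambda>z. a0 + (of_real r * z) *s w) ` sphere 0 1 \<subseteq> M"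
      using disc r by (auto simp: norm_mult)
    have Vcont: "continuous_on (sphere 0 1) V"
      unfolding V_def by (rule continuous_on_compose2[OF ucont gcont gM])
    have Vcis: "continuous_on {0..2*pi} (\<lambda>t. V (cis t))"
      by (rule continuous_on_compose2[OF Vcont]) (auto intro!: continuous_intros)
    have step: "- ln (infdist a0 (- M)) \<le> I / (2*pi) + 2 * e" if e: "e > 0" for e
    proof -
      obtain p where p: "\<forall>z\<in>sphere 0 1. \<bar>V z - Re (poly p z)\<bar> < e"
        using approx_poly[OF Vcont e] by blast
      have c1: "- ln (infdist a0 (- M)) \<le> Re (poly p 0) + e"
      proof (rule claim1[OF M nM ab(1) b sq a0 r disc e])
        show "\<forall>z\<in>sphere 0 1. \<bar>- ln (infdist (a0 + (of_real r * z) *s w) (-M)) - Re (poly p z)\<bar> < e"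
          using p unfolding V_def by simp
      qed
      have hp: "((\<lambda>t. Re (poly p (cis t)) - e) has_integral (2*pi * Re (poly p 0) - 2*pi*e)) {0..2*pi}"
        using has_integral_diff[OF mean_poly[of p] has_integral_const_real[of e 0 "2*pi"]] by simp
      have "integral {0..2*pi} (\<lambda>t. Re (poly p (cis t)) - e) \<le> integral {0..2*pi} (\<lambda>t. V (cis t))"
      proof (rule integral_le)
        show "(\<lambda>t. Re (poly p (cis t)) - e) integrable_on {0..2*pi}" using hp by blast
        show "(\<lambda>t. V (cis t)) integrable_on {0..2*pi}" by (rule integrable_continuous_interval[OF Vcis])
        show "Re (poly p (cis t)) - e \<le> V (cis t)" if "t \<in> {0..2*pi}" for t
        proof -
          have "cis t \<in> sphere 0 1" by simp
          then have "\<bar>V (cis t) - Re (poly p (cis t))\<bar> < e" using p by blast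
          then show ?thesis by linarith
        qed
      qed
      then have "2*pi * Re (poly p 0) - 2*pi*e \<le> I"
        using integral_unique[OF hp] by (simp add: I_def V_def)
      then have "Re (poly p 0) - e \<le> I / (2*pi)"
        by (simp add: field_simps)
      then show ?thesis using c1 by linarith
    qed
    show "- ln (infdist a0 (- M)) \<le> I / (2*pi)"
    proof (rule field_le_epsilon)
      fix e :: real assume "0 < e"
      then show "- ln (infdist a0 (- M)) \<le> I / (2*pi) + e" using step[of "e/2"] by simp
    qed
  qed
qed

end
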